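(* Let $d\ge2$, $j\in[d-1]$, $j\le k\le d$, $R$ an abelian group, and let $M=(K,C)$ be a copy of $M_{j,k}$ in a simplicial complex $\mathcal G$ on $[n]$. Let $f$ be a $j$-cochain of $\mathcal G$ with coefficients in $R$ whose support is contained in the flower $\mathcal F(K,C)$. Then: (i) $f$ is a $j$-cocycle if and only if $f=f_{M,r}$ for some $r\in R$; (ii) if there exist $w\in K\setminus C$ and $a\in[n]\setminus K$ such that $(K,C,w,a)$ is a copy of $\hat M_{j,k}$ in $\mathcal G$, then $f$ is a $j$-cocycle but not a $j$-coboundary if and only if $f=f_{M,r}$ for some $r\in R\setminus\{0_R\}$.
   Context: Cochains: a $j$-cochain is a function $f$ from ordered $j$-simplices $[v_0,\dots,v_j]$ of $\mathcal G$ to $R$ with $f(\sigma)=-f(\sigma')$ when $\sigma'$ is obtained by swapping two vertices; its support is the set of unordered $j$-simplices with nonzero value. The coboundary is $(\delta^jf)([v_0,\dots,v_{j+1}])=\sum_{i=0}^{j+1}(-1)^if([v_0,\dots,\hat v_i,\dots,v_{j+1}])$; $j$-cocycles are elements of $\ker\delta^j$, $j$-coboundaries elements of $\operatorname{im}\delta^{j-1}$. Flowers: for a $k$-simplex $K$ and $C\subset K$ with $|C|=j$, $\mathcal F(K,C)=\{C\cup\{w\}\mid w\in K\setminus C\}$ (its elements are petals). A $(j+2)$-set is a $j$-shell if all its $(j+1)$-subsets are $j$-simplices. Copies: for $j+1\le k\le d$, $(K,C)$ is a copy of $M_{j,k}$ if $K$ is a $k$-simplex of $\mathcal G$ and $C\subset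 K$, $|C|=j$, such that every simplex of $\mathcal G$ containing a petal of $\mathcal F(K,C)$ is contained in $K$; $(K,C)$ is a copy of $M_{j,j}$ if $K$ is an isolated $j$-simplex (in no other simplex of $\mathcal G$) and $C$ is the set of first $j$ vertices of $K$ in increasing order. $(K,C,w,a)$ is a copy of $\hat M_{j,k}$ ($j+1\le k\le d$) if $(K,C)$ is a copy of $M_{j,k}$, $w\in K\setminus C$, $a\in[n]\setminus K$ and $C\cup\{w,a\}$ is a $j$-shell; for $k=j$, $(K,C,w,a)$ is a copy of $\hat M_{j,j}$ if $(K,C)$ is a copy of $M_{j,j}$, $w$ is the last vertex of $K$ in increasing order, $a\notin K$ and $K\cup\{a\}$ is a $j$-shell. $f_{M,r}$: let $v_0,\dots,v_{n-1}$ be the ordering of $[n]$ with $C=\{v_0,\dots,v_{j-1}\}$, $K=\{v_0,\dots,v_k\}$, and vertices within $C$, within $K\setminus C$ and within $[n]\setminus K$ in increasing order. For $r\in R$, $f_{M,r}([v_{i_0},\dots,v_{i_j}])$ with $i_0<\dots<i_j$ equals $r$ if $i_s=s$ for $0\le s\le j-1$ and $j\le i_j\le k$, and $0_R$ otherwise, extended to all orderings alternatingly. *)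

theory Defs
  imports Main
begin

definition simplicial_complex :: "nat \<Rightarrow> nat set set \<Rightarrow> bool" where
  "simplicial_complex n G \<longleftrightarrow>
     (\<forall>\<sigma>\<in>G. \<sigma> \<noteq> {} \<and> \<sigma> \<subseteq> {1..n}) \<and>
     (\<forall>\<sigma>\<in>G. \<forall>\<tau>. \<tau> \<subseteq> \<sigma> \<longrightarrow> \<tau> \<noteq> {} \<longrightarrow> \<tau> \<in> G)"

definition simplex :: "nat set set \<Rightarrow> nat \<Rightarrow> nat set \<Rightarrow> bool" where
  "simplex G j \<sigma> \<longleftrightarrow> \<sigma> \<in> G \<and> card \<sigma> = j + 1"

definition ordered_simplex :: "nat set set \<Rightarrow> nat \<Rightarrow> nat list \<Rightarrow> bool" where
  "ordered_simplex G j \<sigma> \<longleftrightarrow> distinct \<sigma> \<and> length \<sigma> = j + 1 \<and> set \<sigma> \<in> G"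

definition swap_pos :: "nat list \<Rightarrow> nat \<Rightarrow> nat \<Rightarrow> nat list" where
  "swap_pos \<sigma> a b = \<sigma>[a := \<sigma> ! b, b := \<sigma> ! a]"

definition cochain :: "nat set set \<Rightarrow> nat \<Rightarrow> (nat list \<Rightarrow> 'r::ab_group_add) \<Rightarrow> bool" where
  "cochain G j f \<longleftrightarrow>
     (\<forall>\<sigma>. \<not> ordered_simplex G j \<sigma> \<longrightarrow> f \<sigma> = 0) \<and>
     (\<forall>\<sigma>. ordered_simplex G j \<sigma> \<longrightarrow>
        (\<forall>a b. a < length \<sigma> \<longrightarrow> b < length \<sigma> \<longrightarrow> a \<noteq> b \<longrightarrow>
           f (swap_pos \<sigma> a b) = - f \<sigma>))"

definition support :: "nat set set \<Rightarrow> nat \<Rightarrow> (nat list \<Rightarrow> 'r::ab_group_add) \<Rightarrow> nat set set" where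
  "support G j f = {set \<sigma> | \<sigma>. ordered_simplex G j \<sigma> \<and> f \<sigma> \<noteq> 0}"

definition del_nth :: "nat \<Rightarrow> 'a list \<Rightarrow> 'a list" where
  "del_nth i xs = take i xs @ drop (Suc i) xs"

definition coboundary_op :: "(nat list \<Rightarrow> 'r::ab_group_add) \<Rightarrow> nat list \<Rightarrow> 'r" where
  "coboundary_op f \<sigma> = (\<Sum>i<length \<sigma>. (if even i then f (del_nth i \<sigma>) else - f (del_nth i \<sigma>)))"

definition is_cocycle :: "nat set set \<Rightarrow> nat \<Rightarrow> (nat list \<Rightarrow> 'r::ab_group_add) \<Rightarrow> bool" where
  "is_cocycle G j f \<longleftrightarrow> (\<forall>\<tau>. ordered_simplex G (j + 1) \<tau> \<longrightarrow> coboundary_op f \<tau> = 0)"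

definition is_coboundary :: "nat set set \<Rightarrow> nat \<Rightarrow> (nat list \<Rightarrow> 'r::ab_group_add) \<Rightarrow> bool" where
  "is_coboundary G j f \<longleftrightarrow>
     (\<exists>g. cochain G (j - 1) g \<and> (\<forall>\<sigma>. ordered_simplex G j \<sigma> \<longrightarrow> f \<sigma> = coboundary_op g \<sigma>))"

definition flower :: "nat set \<Rightarrow> nat set \<Rightarrow> nat set set" where
  "flower K C = {insert w C | w. w \<in> K - C}"

definition shell :: "nat set set \<Rightarrow> nat \<Rightarrow> nat set \<Rightarrow> bool" where
  "shell G j S \<longleftrightarrow> finite S \<and> card S = j + 2 \<and>
     (\<forall>T. T \<subseteq> S \<longrightarrow> card T = j + 1 \<longrightarrow> simplex G j T)"

definition copy_M :: "nat set set \<Rightarrow> nat \<Rightarrow> nat \<Rightarrow> nat \<Rightarrow> nat set \<Rightarrow> nat set \<Rightarrow> bool" where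
  "copy_M G d j k K C \<longleftrightarrow>
     (if j + 1 \<le> k \<and> k \<le> d then
        simplex G k K \<and> C \<subseteq> K \<and> card C = j \<and>
        (\<forall>\<sigma>\<in>G. (\<exists>p\<in>flower K C. p \<subseteq> \<sigma>) \<longrightarrow> \<sigma> \<subseteq> K)
      else if k = j then
        simplex G j K \<and> (\<forall>\<sigma>\<in>G. K \<subseteq> \<sigma> \<longrightarrow> \<sigma> = K) \<and>
        C = set (take j (sorted_list_of_set K))
      else False)"

definition copy_Mhat :: "nat \<Rightarrow> nat set set \<Rightarrow> nat \<Rightarrow> nat \<Rightarrow> nat \<Rightarrow> nat set \<Rightarrow> nat set \<Rightarrow> nat \<Rightarrow> nat \<Rightarrow> bool" where
  "copy_Mhat n G d j k K C w a \<longleftrightarrow>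
     copy_M G d j k K C \<and> a \<in> {1..n} - K \<and>
     (if j + 1 \<le> k then w \<in> K - C \<and> shell G j (C \<union> {w, a})
      else w = Max K \<and> shell G j (insert a K))"

definition vertex_order :: "nat \<Rightarrow> nat set \<Rightarrow> nat set \<Rightarrow> nat list" where
  "vertex_order n K C = sorted_list_of_set C @ sorted_list_of_set (K - C)
      @ sorted_list_of_set ({1..n} - K)"

definition position :: "nat list \<Rightarrow> nat \<Rightarrow> nat" where
  "position xs v = (LEAST i. i < length xs \<and> xs ! i = v)"

definition inversions :: "(nat \<Rightarrow> nat) \<Rightarrow> nat list \<Rightarrow> nat" where
  "inversions p \<sigma> = card {(a, b). a < b \<and> b < length \<sigma> \<and> p (\<sigma> ! a) > p (\<sigma> ! b)}"

text \<open>f_{M,r}: on [v_{i_0},...,v_{i_j}] with i_0<...<i_j the value is r if i_s = s for s<j and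
  j \<le> i_j \<le> k, else 0; extended alternatingly (sign of the sorting permutation); 0 off ordered j-simplices.\<close>
definition f_M :: "nat \<Rightarrow> nat set set \<Rightarrow> nat \<Rightarrow> nat \<Rightarrow> nat set \<Rightarrow> nat set \<Rightarrow> 'r::ab_group_add \<Rightarrow> nat list \<Rightarrow> 'r" where
  "f_M n G j k K C r \<sigma> =
     (if ordered_simplex G j \<sigma> then
        (let pos = (\<lambda>v. position (vertex_order n K C) v);
             is = map pos (sort_key pos \<sigma>);
             val = (if (\<forall>s<j. is ! s = s) \<and> j \<le> is ! j \<and> is ! j \<le> k then r else 0)
         in if even (inversions pos \<sigma>) then val else - val)
      else 0)"

end

theory Submission
  imports Defs
begin

lemma swap_nth:
  assumes "Suc i < length s" "m < length s"
  shows "swap_pos s i (Suc i) ! m = s ! (if m = i then Suc i else if m = Suc i then i else m)"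
  using assms by (auto simp: swap_pos_def nth_list_update)

lemma swap_len[simp]: "length (swap_pos s a b) = length s"
  by (simp add: swap_pos_def)

lemma swap_set: "a < length s \<Longrightarrow> b < length s \<Longrightarrow> set (swap_pos s a b) = set s"
  by (simp add: swap_pos_def)

lemma swap_distinct: "a < length s \<Longrightarrow> b < length s \<Longrightarrow> distinct (swap_pos s a b) = distinct s"
  by (simp add: swap_pos_def)

lemma sort_uniq:
  assumes "distinct xs" "distinct ys" "set xs = set ys" "inj_on p (set xs)" "sorted (map p ys)"
  shows "sort_key p xs = ys"
proof -
  let ?z = "sort_key p xs"
  have "map p ?z = map p ys"
  proof (rule sorted_distinct_set_unique)
    show "distinct (map p ?z)" using assms by (simp add: distinct_map)
    show "distinct (map p ys)" using assms by (simp add: distinct_map)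
  qed (use assms in auto)
  then show ?thesis using assms inj_on_map_eq_map[of p ?z ys] by simp
qed

lemma inv_finite: "finite {(a, b). a < b \<and> b < length s \<and> P a b}"
  by (rule finite_subset[of _ "{..<length s} \<times> {..<length s}"]) auto

lemma inv_sorted: "sorted (map p s) \<Longrightarrow> inversions p s = 0"
  unfolding inversions_def
proof -
  assume "sorted (map p s)"
  then have "{(a, b). a < b \<and> b < length s \<and> p (s ! b) < p (s ! a)} = {}"
    using sorted_nth_mono[of "map p s"] by (auto simp: not_less[symmetric])
  then show "card {(a, b). a < b \<and> b < length s \<and> p (s ! b) < p (s ! a)} = 0" by (metis card.empty)
qed

lemma inv_swap:
  assumes i: "Suc i < length s" and d: "p (s ! i) > p (s ! Suc i)"
  shows "inversions p (swap_pos s i (Suc i)) + 1 = inversions p s"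
proof -
  define s' where "s' = swap_pos s i (Suc i)"
  define S where "S = {(a, b). a < b \<and> b < length s \<and> p (s ! b) < p (s ! a)}"
  define S' where "S' = {(a, b). a < b \<and> b < length s' \<and> p (s' ! b) < p (s' ! a)}"
  define t where "t x = (if x = i then Suc i else if x = Suc i then i else x)" for x
  define \<phi> where "\<phi> = (\<lambda>(a::nat, b::nat). (t a, t b))"
  have len: "length s' = length s" by (simp add: s'_def)
  have nth': "m < length s \<Longrightarrow> s' ! m = s ! t m" for m
    using swap_nth[OF i, of m] by (simp add: s'_def t_def)
  have key: "a < b \<Longrightarrow> b < length s \<Longrightarrow> (a, b) \<noteq> (i, Suc i) \<Longrightarrow> t a < t b \<and> t b < length s \<and> t (t a) = a \<and> t (t b) = b
     \<and> (t a, t b) \<noteq> (i, Suc i)" for a b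
    using i by (auto simp: t_def)
  have bij: "bij_betw \<phi> (S' - {(i, Suc i)}) (S - {(i, Suc i)})"
  proof (rule bij_betw_byWitness[where f' = \<phi>])
    show "\<forall>a\<in>S' - {(i, Suc i)}. \<phi> (\<phi> a) = a"
      using key by (auto simp: \<phi>_def S'_def len)
    show "\<forall>a\<in>S - {(i, Suc i)}. \<phi> (\<phi> a) = a"
      using key by (auto simp: \<phi>_def S_def)
    show "\<phi> ` (S' - {(i, Suc i)}) \<subseteq> S - {(i, Suc i)}"
    proof
      fix x assume "x \<in> \<phi> ` (S' - {(i, Suc i)})"
      then obtain y where y: "x = \<phi> y" "y \<in> S' - {(i, Suc i)}" by blast
      obtain a b where "y = (a, b)" by (cases y)
      with y have x: "x = \<phi> (a, b)" and m: "(a, b) \<in> S' - {(i, Suc i)}" by simp_all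
      from m have m1: "(a, b) \<in> S'" and ab4: "(a, b) \<noteq> (i, Suc i)" by simp_all
      from m1 have "a < b \<and> b < length s' \<and> p (s' ! b) < p (s' ! a)" unfolding S'_def by simp
      with ab4 len have ab: "a < b" "b < length s" "p (s' ! b) < p (s' ! a)" "(a, b) \<noteq> (i, Suc i)"
        by simp_all
      have al: "a < length s" using ab by simp
      have "s' ! a = s ! t a" using nth'[OF al] .
      moreover have "s' ! b = s ! t b" using nth'[OF ab(2)] .
      ultimately have "p (s ! t b) < p (s ! t a)" using ab(3) by simp
      moreover have "t a < t b" "t b < length s" "(t a, t b) \<noteq> (i, Suc i)" using key[OF ab(1,2,4)] by auto
      ultimately have "(t a, t b) \<in> S - {(i, Suc i)}" unfolding S_def by blast
      then show "x \<in> S - {(i, Suc i)}" unfolding x \<phi>_def by simp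
    qed
    show "\<phi> ` (S - {(i, Suc i)}) \<subseteq> S' - {(i, Suc i)}"
    proof
      fix x assume "x \<in> \<phi> ` (S - {(i, Suc i)})"
      then obtain y where y: "x = \<phi> y" "y \<in> S - {(i, Suc i)}" by blast
      obtain a b where "y = (a, b)" by (cases y)
      with y have x: "x = \<phi> (a, b)" and m: "(a, b) \<in> S - {(i, Suc i)}" by simp_all
      from m have ab: "a < b" "b < length s" "p (s ! b) < p (s ! a)" "(a, b) \<noteq> (i, Suc i)"
        by (auto simp: S_def)
      have k: "t a < t b" "t b < length s" "(t a, t b) \<noteq> (i, Suc i)" "t (t a) = a" "t (t b) = b" using key[OF ab(1,2,4)] by auto
      have "s' ! t b = s ! b" "s' ! t a = s ! a" using nth'[of "t b"] nth'[of "t a"] k by auto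
      then have "p (s' ! t b) < p (s' ! t a)" using ab(3) by simp
      with k have "(t a, t b) \<in> S' - {(i, Suc i)}" unfolding S'_def len by blast
      then show "x \<in> S' - {(i, Suc i)}" unfolding x \<phi>_def by simp
    qed
  qed
  have fS: "finite S" "finite S'" unfolding S_def S'_def by (rule inv_finite)+
  have inS: "(i, Suc i) \<in> S" using i d by (simp add: S_def)
  have "s' ! i = s ! Suc i" "s' ! Suc i = s ! i" using nth'[of i] nth'[of "Suc i"] i by (auto simp: t_def)
  then have ninS': "(i, Suc i) \<notin> S'" using d unfolding S'_def by simp
  have "card S' = card (S - {(i, Suc i)})" using bij_betw_same_card[OF bij] ninS' by simp
  also have "\<dots> = card S - 1" using inS fS by simp
  finally have c1: "card S' = card S - 1" .
  moreover have "card S > 0" using inS fS card_gt_0_iff by blast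
  ultimately have "card S' + 1 = card S" by linarith
  moreover have "inversions p s' = card S'" unfolding inversions_def S'_def by simp
  moreover have "inversions p s = card S" unfolding inversions_def S_def by simp
  ultimately show ?thesis by (simp add: s'_def)
qed

lemma alt_sort:
  fixes h :: "nat list \<Rightarrow> 'r::ab_group_add"
  assumes alt: "\<And>s i. P s \<Longrightarrow> Suc i < length s \<Longrightarrow> P (swap_pos s i (Suc i)) \<and> h (swap_pos s i (Suc i)) = - h s"
  shows "P s \<Longrightarrow> distinct s \<Longrightarrow> inj_on p (set s) \<Longrightarrow>
    h s = (if even (inversions p s) then h (sort_key p s) else - h (sort_key p s))"
proof (induction "inversions p s" arbitrary: s rule: less_induct)
  case less
  show ?case
  proof (cases "sorted (map p s)")
    case True
    then show ?thesis by (simp add: inv_sorted sort_key_id_if_sorted)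
  next
    case False
    then obtain i where i: "Suc i < length s" and d: "p (s ! i) > p (s ! Suc i)"
      unfolding sorted_iff_nth_Suc by (auto simp: not_le)
    define s' where "s' = swap_pos s i (Suc i)"
    have inv: "inversions p s' + 1 = inversions p s" using inv_swap[OF i d] by (simp add: s'_def)
    have set': "set s' = set s" using i by (simp add: s'_def swap_set)
    have P': "P s'" and h': "h s' = - h s" using alt[OF less(2) i] by (auto simp: s'_def)
    have dist': "distinct s'" using i less(3) by (simp add: s'_def swap_distinct)
    have IH: "h s' = (if even (inversions p s') then h (sort_key p s') else - h (sort_key p s'))"
      using less(1)[of s'] inv P' dist' less(4) set' by simp
    have "sort_key p s' = sort_key p s"
      by (rule sort_uniq) (use dist' set' less(3,4) in auto)
    moreover have "h s = - h s'" using h' by simp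
    ultimately show ?thesis using IH inv[symmetric] by auto
  qed
qed

lemma del_len[simp]: "i < length xs \<Longrightarrow> length (del_nth i xs) = length xs - 1"
  by (simp add: del_nth_def)

lemma del_nth_nth: "i < length xs \<Longrightarrow> m < length xs - 1 \<Longrightarrow>
   del_nth i xs ! m = xs ! (if m < i then m else Suc m)"
  by (auto simp: del_nth_def nth_append min_def)

lemma del_distinct: "distinct xs \<Longrightarrow> distinct (del_nth i xs)"
  unfolding del_nth_def using set_take_disj_set_drop_if_distinct[of xs i "Suc i"] by auto

lemma del_set: "distinct xs \<Longrightarrow> i < length xs \<Longrightarrow> set (del_nth i xs) = set xs - {xs ! i}"
proof -
  assume d: "distinct xs" and i: "i < length xs"
  have e: "xs = take i xs @ [xs ! i] @ drop (Suc i) xs" using id_take_nth_drop[OF i] by simp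
  have "distinct (take i xs @ [xs ! i] @ drop (Suc i) xs)" using d e by simp
  then have "xs ! i \<notin> set (take i xs) \<union> set (drop (Suc i) xs)" by auto
  moreover have "set xs = set (take i xs) \<union> {xs ! i} \<union> set (drop (Suc i) xs)"
    by (subst e) auto
  ultimately show ?thesis unfolding del_nth_def by auto
qed

lemma del_swap_other:
  assumes i: "Suc i < length t" and l: "l < length t" "l \<noteq> i" "l \<noteq> Suc i"
  shows "del_nth l (swap_pos t i (Suc i)) =
     swap_pos (del_nth l t) (if l < i then i - 1 else i) (Suc (if l < i then i - 1 else i))"
proof (rule nth_equalityI)
  show "length (del_nth l (swap_pos t i (Suc i))) = length (swap_pos (del_nth l t) (if l < i then i - 1 else i) (Suc (if l < i then i - 1 else i)))"
    using l by simp
next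
  fix m assume "m < length (del_nth l (swap_pos t i (Suc i)))"
  then have m: "m < length t - 1" using l by simp
  have s1: "Suc (if l < i then i - 1 else i) < length (del_nth l t)" using i l by auto
  show "del_nth l (swap_pos t i (Suc i)) ! m = swap_pos (del_nth l t) (if l < i then i - 1 else i) (Suc (if l < i then i - 1 else i)) ! m"
    using i l m
    apply (subst swap_nth[OF s1])
     apply simp
    apply (subst del_nth_nth)
      apply simp
     apply simp
    apply (subst del_nth_nth)
      apply simp
     apply (auto split: if_splits)[1]
    apply (subst swap_nth)
      apply simp
     apply (auto split: if_splits)[1]
    apply (auto split: if_splits)
    done
qed

lemma del_swap_i: "Suc i < length t \<Longrightarrow> del_nth i (swap_pos t i (Suc i)) = del_nth (Suc i) t"
  by (rule nth_equalityI) (auto simp: del_nth_nth swap_nth, (metis less_antisym)+)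

lemma del_swap_Suc_i: "Suc i < length t \<Longrightarrow> del_nth (Suc i) (swap_pos t i (Suc i)) = del_nth i t"
  by (rule nth_equalityI) (auto simp: del_nth_nth swap_nth, (metis less_antisym)+)

definition sg :: "nat \<Rightarrow> 'r::ab_group_add \<Rightarrow> 'r" where
  "sg n x = (if even n then x else - x)"

lemma cob_sg: "coboundary_op f s = (\<Sum>l<length s. sg l (f (del_nth l s)))"
  by (simp add: coboundary_op_def sg_def)

lemma cob_alt:
  assumes falt: "\<And>s a. Suc a < length s \<Longrightarrow> f (swap_pos s a (Suc a)) = - f s"
    and i: "Suc i < length t"
  shows "coboundary_op f (swap_pos t i (Suc i)) = - coboundary_op f t"
proof -
  define tr where "tr l = (if l = i then Suc i else if l = Suc i then i else l)" for l
  have eq: "sg l (f (del_nth l (swap_pos t i (Suc i)))) = - sg (tr l) (f (del_nth (tr l) t))"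
    if l: "l < length t" for l
  proof (cases "l = i \<or> l = Suc i")
    case True
    then show ?thesis using i del_swap_i[OF i] del_swap_Suc_i[OF i]
      by (auto simp: tr_def sg_def)
  next
    case False
    have s1: "Suc (if l < i then i - 1 else i) < length (del_nth l t)" using i l False by auto
    show ?thesis using False del_swap_other[OF i l] falt[OF s1]
      by (auto simp: tr_def sg_def)
  qed
  have "coboundary_op f (swap_pos t i (Suc i)) = (\<Sum>l<length t. - sg (tr l) (f (del_nth (tr l) t)))"
    unfolding cob_sg using eq by simp
  also have "\<dots> = (\<Sum>l<length t. - sg l (f (del_nth l t)))"
    by (rule sum.reindex_bij_witness[where i = tr and j = tr]) (use i in \<open>auto simp: tr_def\<close>)
  also have "\<dots> = - coboundary_op f t" unfolding cob_sg by (simp add: sum_negf)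
  finally show ?thesis .
qed

lemma del_del: "i \<le> m \<Longrightarrow> Suc m < length r \<Longrightarrow> del_nth m (del_nth i r) = del_nth i (del_nth (Suc m) r)"
  by (rule nth_equalityI) (auto simp: del_nth_nth)

lemma tri_swap: "(\<Sum>i<L. \<Sum>m\<in>{Suc i..<L}. H i m) = (\<Sum>m<L. \<Sum>i<m. (H i m :: 'r::comm_monoid_add))"
proof (induction L)
  case 0 then show ?case by simp
next
  case (Suc L)
  have "(\<Sum>i<Suc L. \<Sum>m\<in>{Suc i..<Suc L}. H i m) = (\<Sum>i<L. (\<Sum>m\<in>{Suc i..<L}. H i m) + H i L)"
    by (simp add: atLeastLessThanSuc ac_simps)
  also have "\<dots> = (\<Sum>i<L. \<Sum>m\<in>{Suc i..<L}. H i m) + (\<Sum>i<L. H i L)" by (simp add: sum.distrib)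
  finally show ?case using Suc by simp
qed

lemma sg_sum: "sg n (\<Sum>x\<in>A. F x) = (\<Sum>x\<in>A. sg n (F x))"
  by (simp add: sg_def sum_negf)

lemma sg_sg: "sg a (sg b x) = sg (a + b) x"
  by (simp add: sg_def)

lemma dd: "coboundary_op (coboundary_op g) r = 0"
proof -
  define L where "L = length r"
  define H where "H i m = sg (i + m) (g (del_nth m (del_nth i r)))" for i m
  have "coboundary_op (coboundary_op g) r = (\<Sum>i<L. \<Sum>m<L - 1. H i m)"
    unfolding cob_sg L_def H_def by (simp add: sg_sum sg_sg)
  also have "\<dots> = (\<Sum>i<L. (\<Sum>m<i. H i m) + (\<Sum>m\<in>{i..<L - 1}. H i m))"
  proof (rule sum.cong)
    fix i assume "i \<in> {..<L}"
    then have "{..<L - 1} = {..<i} \<union> {i..<L - 1}" "{..<i} \<inter> {i..<L - 1} = {}" by auto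
    then show "(\<Sum>m<L - 1. H i m) = (\<Sum>m<i. H i m) + (\<Sum>m\<in>{i..<L - 1}. H i m)"
      by (simp add: sum.union_disjoint)
  qed simp
  also have "\<dots> = (\<Sum>i<L. \<Sum>m<i. H i m) + (\<Sum>i<L. \<Sum>m\<in>{i..<L - 1}. H i m)"
    by (simp add: sum.distrib)
  also have "(\<Sum>i<L. \<Sum>m\<in>{i..<L - 1}. H i m) = (\<Sum>i<L. \<Sum>m\<in>{Suc i..<L}. - H m i)"
  proof (rule sum.cong)
    fix i assume i: "i \<in> {..<L}"
    show "(\<Sum>m\<in>{i..<L - 1}. H i m) = (\<Sum>m\<in>{Suc i..<L}. - H m i)"
    proof (rule sum.reindex_bij_witness[where i = "\<lambda>m. m - 1" and j = Suc])
      fix a assume a: "a \<in> {i..<L - 1}"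
      have "del_nth a (del_nth i r) = del_nth i (del_nth (Suc a) r)"
        using del_del[of i a r] a by (auto simp: L_def)
      then show "- H (Suc a) i = H i a"
        by (auto simp: H_def sg_def add.commute)
    qed auto
  qed simp
  also have "\<dots> = (\<Sum>m<L. \<Sum>i<m. - H m i)" by (rule tri_swap)
  also have "\<dots> = - (\<Sum>m<L. \<Sum>i<m. H m i)" by (simp add: sum_negf)
  finally show ?thesis by simp
qed

lemma osimp_swap: "a < length s \<Longrightarrow> b < length s \<Longrightarrow>
   ordered_simplex G j (swap_pos s a b) \<longleftrightarrow> ordered_simplex G j s"
  by (simp add: ordered_simplex_def swap_set swap_distinct)

lemma cochain_alt: "cochain G j f \<Longrightarrow> Suc a < length s \<Longrightarrow> f (swap_pos s a (Suc a)) = - f s"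
  unfolding cochain_def using osimp_swap[of a s "Suc a" G j] by (cases "ordered_simplex G j s") auto

lemma fM_zero: "f_M n G j k K C 0 = (\<lambda>_. 0)"
  by (rule ext) (simp add: f_M_def Let_def)

lemma alt_zero:
  fixes h :: "nat list \<Rightarrow> 'r::ab_group_add" and p :: "nat \<Rightarrow> nat"
  assumes alt: "\<And>s i. P s \<Longrightarrow> Suc i < length s \<Longrightarrow> P (swap_pos s i (Suc i)) \<and> h (swap_pos s i (Suc i)) = - h s"
    and "P s" "P s'" "distinct s" "distinct s'" "set s = set s'" "inj_on p (set s)" "h s' = 0"
  shows "h s = 0"
proof -
  have e: "sort_key p s = sort_key p s'"
    by (rule sort_uniq) (use assms(4,5,6,7) in auto)
  have "h s' = (if even (inversions p s') then h (sort_key p s') else - h (sort_key p s'))"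
    by (rule alt_sort[where P = P]) (use assms in auto)
  then have "h (sort_key p s) = 0" using assms(8) e by (auto split: if_splits)
  moreover have "h s = (if even (inversions p s) then h (sort_key p s) else - h (sort_key p s))"
    by (rule alt_sort[where P = P]) (use assms in auto)
  ultimately show ?thesis by simp
qed

locale cx =
  fixes n j k :: nat and G :: "nat set set" and K C :: "nat set"
  assumes SC: "simplicial_complex n G" and KG: "K \<in> G" and cK: "card K = k + 1"
    and CK: "C \<subseteq> K" and cC: "card C = j" and jk: "j \<le> k"
    and fl: "\<forall>\<sigma>\<in>G. (\<exists>p\<in>flower K C. p \<subseteq> \<sigma>) \<longrightarrow> \<sigma> \<subseteq> K"

context cx begin


abbreviation "vo \<equiv> vertex_order n K C"
abbreviation "pos \<equiv> position (vertex_order n K C)"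
abbreviation "sC \<equiv> sorted_list_of_set C"
abbreviation "sKC \<equiv> sorted_list_of_set (K - C)"

lemmas [simp] = cC

lemma Kn: "K \<subseteq> {1..n}" using SC KG unfolding simplicial_complex_def by auto
lemma finK: "finite K" using Kn finite_subset by blast
lemma finC: "finite C" using finK CK finite_subset by blast
lemma G_sub: "\<sigma> \<in> G \<Longrightarrow> \<sigma> \<subseteq> {1..n}" using SC unfolding simplicial_complex_def by auto
lemma G_closed: "\<sigma> \<in> G \<Longrightarrow> \<tau> \<subseteq> \<sigma> \<Longrightarrow> \<tau> \<noteq> {} \<Longrightarrow> \<tau> \<in> G"
  using SC unfolding simplicial_complex_def by blast

lemma len_sC[simp]: "length sC = j" using cC by simp
lemma set_sC[simp]: "set sC = C" using finC by simp
lemma dist_sC[simp]: "distinct sC" by simp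
lemma len_sKC: "length sKC = k + 1 - j"
  using cK cC CK finK finC by (simp add: card_Diff_subset)
lemma set_sKC: "set sKC = K - C" using finK by simp

lemma vo_distinct: "distinct vo"
  unfolding vertex_order_def using finK finC CK by auto
lemma vo_set: "set vo = {1..n}"
proof -
  have "set vo = C \<union> (K - C) \<union> ({1..n} - K)" unfolding vertex_order_def using finK finC by auto
  then show ?thesis using CK Kn by blast
qed
lemma vo_len: "length vo \<ge> k + 1"
  unfolding vertex_order_def using len_sKC jk cC by simp

lemma vo_nth_C: "m < j \<Longrightarrow> vo ! m = sC ! m"
  unfolding vertex_order_def by (simp add: nth_append cC)

lemma vo_nth_KC: "j \<le> m \<Longrightarrow> m \<le> k \<Longrightarrow> vo ! m = sKC ! (m - j)"
  unfolding vertex_order_def using len_sKC by (simp add: nth_append)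

lemma pos_nth: "m < length vo \<Longrightarrow> pos (vo ! m) = m"
  unfolding position_def
  by (rule Least_equality) (use vo_distinct nth_eq_iff_index_eq in auto)

lemma nth_pos: "v \<in> {1..n} \<Longrightarrow> pos v < length vo \<and> vo ! pos v = v"
proof -
  assume "v \<in> {1..n}"
  then obtain m where "m < length vo" "vo ! m = v" using vo_set by (metis in_set_conv_nth)
  then show ?thesis using pos_nth by auto
qed

lemma inj_pos: "inj_on pos {1..n}"
  by (rule inj_onI) (metis nth_pos)

lemma inj_pos': "A \<subseteq> {1..n} \<Longrightarrow> inj_on pos A"
  using inj_pos inj_on_subset by blast

lemma pos_sC: "m < j \<Longrightarrow> pos (sC ! m) = m"
proof -
  assume m: "m < j"
  then have "m < length vo" using vo_len jk by linarith
  then show ?thesis using vo_nth_C[OF m] pos_nth by metis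
qed

lemma pos_KC: "v \<in> K - C \<Longrightarrow> j \<le> pos v \<and> pos v \<le> k"
proof -
  assume v: "v \<in> K - C"
  then obtain m where m: "m < length sKC" "sKC ! m = v" using set_sKC by (metis in_set_conv_nth)
  then have "vo ! (j + m) = v" using vo_nth_KC[of "j + m"] len_sKC by simp
  moreover have "j + m < length vo" using m len_sKC vo_len by simp
  ultimately have "pos v = j + m" using pos_nth by metis
  then show ?thesis using m len_sKC by simp
qed

lemma map_pos_sC: "map pos sC = [0..<j]"
  by (rule nth_equalityI) (auto simp: pos_sC cC)

lemma petal_in_G: "w \<in> K - C \<Longrightarrow> insert w C \<in> G"
  using G_closed[OF KG, of "insert w C"] CK by auto

lemma petal_simplex: "w \<in> K - C \<Longrightarrow> ordered_simplex G j (sC @ [w])"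
  unfolding ordered_simplex_def using petal_in_G by auto

lemma petal_sorted: "w \<in> K - C \<Longrightarrow> sorted (map pos (sC @ [w]))"
  using pos_KC[of w] by (auto simp: map_pos_sC sorted_append)

lemma sort_petal:
  assumes "distinct s" "set s = insert w C" "w \<in> K - C"
  shows "sort_key pos s = sC @ [w]"
proof (rule sort_uniq)
  show "inj_on pos (set s)" using assms Kn CK by (intro inj_pos') auto
qed (use assms petal_sorted in auto)


end

context cx begin

lemma cond_iff:
  assumes "distinct s" "length s = j + 1" "set s \<subseteq> {1..n}"
  shows "((\<forall>i<j. map pos s ! i = i) \<and> j \<le> map pos s ! j \<and> map pos s ! j \<le> k) \<longleftrightarrow>
     (\<exists>w\<in>K - C. s = sC @ [w])"
proof
  assume c: "(\<forall>i<j. map pos s ! i = i) \<and> j \<le> map pos s ! j \<and> map pos s ! j \<le> k"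
  have inn: "i < length s \<Longrightarrow> s ! i \<in> {1..n}" for i using assms(3) nth_mem by blast
  have t: "take j s = sC"
  proof (rule nth_equalityI)
    show "length (take j s) = length sC" using assms by simp
  next
    fix i assume "i < length (take j s)"
    then have i: "i < j" using assms by simp
    then have "pos (s ! i) = i" using c assms by auto
    then have "s ! i = vo ! i" using nth_pos[OF inn[of i]] i assms by simp
    then show "take j s ! i = sC ! i" using i vo_nth_C by simp
  qed
  have pj: "pos (s ! j) \<ge> j" "pos (s ! j) \<le> k" using c assms by auto
  have "s ! j = vo ! pos (s ! j)" using nth_pos[OF inn[of j]] assms by simp
  also have "\<dots> = sKC ! (pos (s ! j) - j)" using vo_nth_KC pj by simp
  also have "\<dots> \<in> K - C" using pj len_sKC set_sKC
    by (metis Suc_eq_plus1 diff_less_mono le_imp_less_Suc nth_mem)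
  finally have w: "s ! j \<in> K - C" .
  have "s = take j s @ [s ! j]" using assms(2)
    by (metis Suc_eq_plus1 append.right_neutral id_take_nth_drop drop_all lessI order_refl append_Cons append_Nil)
  then have "s = sC @ [s ! j]" using t by simp
  then show "\<exists>w\<in>K - C. s = sC @ [w]" using w by blast
next
  assume "\<exists>w\<in>K - C. s = sC @ [w]"
  then obtain w where w: "w \<in> K - C" "s = sC @ [w]" by blast
  show "(\<forall>i<j. map pos s ! i = i) \<and> j \<le> map pos s ! j \<and> map pos s ! j \<le> k"
    using w pos_KC[of w] pos_sC by (auto simp: nth_append)
qed

lemma fM_val:
  assumes os: "ordered_simplex G j s"
  shows "f_M n G j k K C r s = (if even (inversions pos s) then
     (if \<exists>w\<in>K - C. sort_key pos s = sC @ [w] then r else 0)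
     else - (if \<exists>w\<in>K - C. sort_key pos s = sC @ [w] then r else 0))"
proof -
  have "distinct (sort_key pos s)" "length (sort_key pos s) = j + 1" "set (sort_key pos s) \<subseteq> {1..n}"
    using os G_sub unfolding ordered_simplex_def by auto
  note ci = cond_iff[OF this]
  show ?thesis unfolding f_M_def Let_def using os ci by simp
qed

lemma fM_petal: "w \<in> K - C \<Longrightarrow> f_M n G j k K C r (sC @ [w]) = r"
  using fM_val[OF petal_simplex, of w r] petal_sorted[of w]
  by (simp add: inv_sorted sort_key_id_if_sorted)

lemma f_zero:
  assumes "cochain G j f" "support G j f \<subseteq> flower K C" "\<not> (\<exists>w\<in>K - C. set s = insert w C)"
  shows "f s = 0"
proof (rule ccontr)
  assume nz: "f s \<noteq> 0"
  then have "ordered_simplex G j s" using assms(1) unfolding cochain_def by auto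
  then have "set s \<in> support G j f" using nz unfolding support_def by auto
  then have "set s \<in> flower K C" using assms(2) by auto
  then show False using assms(3) unfolding flower_def by auto
qed

lemma f_zero_sub:
  assumes "cochain G j f" "support G j f \<subseteq> flower K C" "\<not> (\<exists>w\<in>K - C. insert w C \<subseteq> set s)"
  shows "f s = 0"
  using f_zero[OF assms(1,2)] assms(3) by auto

lemma f_form:
  fixes f :: "nat list \<Rightarrow> 'r::ab_group_add"
  assumes cf: "cochain G j f" and sp: "support G j f \<subseteq> flower K C" and pv: "\<forall>w\<in>K - C. f (sC @ [w]) = r"
  shows "f = f_M n G j k K C r"
proof (rule ext)
  fix s
  show "f s = f_M n G j k K C r s"
  proof (cases "ordered_simplex G j s")
    case False
    then show ?thesis using cf unfolding cochain_def f_M_def by simp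
  next
    case os: True
    have ds: "distinct s" and ss: "set s \<subseteq> {1..n}" using os G_sub unfolding ordered_simplex_def by auto
    have alt: "f s = (if even (inversions pos s) then f (sort_key pos s) else - f (sort_key pos s))"
      by (rule alt_sort[where P = "ordered_simplex G j"])
        (use os ds ss cochain_alt[OF cf] osimp_swap inj_pos' in auto)
    have fs: "f (sort_key pos s) = (if \<exists>w\<in>K - C. sort_key pos s = sC @ [w] then r else 0)"
    proof (cases "\<exists>w\<in>K - C. sort_key pos s = sC @ [w]")
      case True
      then show ?thesis using pv by auto
    next
      case False
      have "\<not> (\<exists>w\<in>K - C. set (sort_key pos s) = insert w C)"
      proof
        assume "\<exists>w\<in>K - C. set (sort_key pos s) = insert w C"
        then obtain w where "w \<in> K - C" "set s = insert w C" by auto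
        then have "sort_key pos s = sC @ [w]" using sort_petal ds by blast
        then show False using False \<open>w \<in> K - C\<close> by blast
      qed
      then show ?thesis using False f_zero[OF cf sp] by auto
    qed
    have fv: "f_M n G j k K C r s = (if even (inversions pos s) then
     (if \<exists>w\<in>K - C. sort_key pos s = sC @ [w] then r else 0)
     else - (if \<exists>w\<in>K - C. sort_key pos s = sC @ [w] then r else 0))" by (rule fM_val[OF os])
    show ?thesis by (simp only: alt fs fv)
  qed
qed


end

context cx begin

lemma two_simplex:
  assumes "x \<notin> C" "y \<notin> C" "x \<noteq> y"
  shows "coboundary_op f (sC @ [x, y]) =
    (\<Sum>l<j. sg l (f (del_nth l (sC @ [x, y])))) + sg j (f (sC @ [y])) + sg (Suc j) (f (sC @ [x]))"
proof -
  have "del_nth j (sC @ [x, y]) = sC @ [y]" "del_nth (Suc j) (sC @ [x, y]) = sC @ [x]"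
    by (simp_all add: del_nth_def)
  then show ?thesis unfolding cob_sg by simp
qed

lemma low_terms_zero:
  assumes cf: "cochain G j f" and sp: "support G j f \<subseteq> flower K C"
    and "x \<notin> C" "y \<notin> C" "x \<noteq> y"
  shows "(\<Sum>l<j. sg l (f (del_nth l (sC @ [x, y])))) = 0"
proof (rule sum.neutral, rule ballI)
  fix l assume "l \<in> {..<j}"
  then have l: "l < j" by simp
  have d: "distinct (sC @ [x, y])" using assms by simp
  have "set (del_nth l (sC @ [x, y])) = set (sC @ [x, y]) - {sC ! l}"
    using del_set[OF d, of l] l by (simp add: nth_append)
  moreover have "sC ! l \<in> C" using l set_sC nth_mem len_sC by metis
  ultimately have "\<not> C \<subseteq> set (del_nth l (sC @ [x, y]))" by auto
  then have "f (del_nth l (sC @ [x, y])) = 0" using f_zero_sub[OF cf sp] by blast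
  then show "sg l (f (del_nth l (sC @ [x, y]))) = 0" by (simp add: sg_def)
qed

lemma cob_two:
  assumes cf: "cochain G j f" and sp: "support G j f \<subseteq> flower K C"
    and "x \<notin> C" "y \<notin> C" "x \<noteq> y"
  shows "coboundary_op f (sC @ [x, y]) = sg j (f (sC @ [y])) + sg (Suc j) (f (sC @ [x]))"
  using two_simplex[OF assms(3-5), of f] low_terms_zero[OF assms] by simp

lemma sg_pair: "sg j (a::'r::ab_group_add) + sg (Suc j) b = 0 \<longleftrightarrow> a = b"
  by (auto simp: sg_def algebra_simps)

lemma cocycle_petals:
  fixes f :: "nat list \<Rightarrow> 'r::ab_group_add"
  assumes cf: "cochain G j f" and sp: "support G j f \<subseteq> flower K C" and cc: "is_cocycle G j f"
    and w: "w \<in> K - C" and w': "w' \<in> K - C"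
  shows "f (sC @ [w]) = f (sC @ [w'])"
proof (cases "w = w'")
  case False
  have "insert w (insert w' C) \<in> G" using G_closed[OF KG, of "insert w (insert w' C)"] CK w w' by auto
  then have "ordered_simplex G (j + 1) (sC @ [w, w'])"
    unfolding ordered_simplex_def using w w' False by auto
  then have "coboundary_op f (sC @ [w, w']) = 0" using cc unfolding is_cocycle_def by blast
  then have "f (sC @ [w']) = f (sC @ [w])"
    using cob_two[OF cf sp, of w w'] w w' False sg_pair by auto
  then show ?thesis by simp
qed simp

lemma ex_w: "\<exists>w. w \<in> K - C"
proof -
  have "card (K - C) = k + 1 - j" using cK cC CK finC by (simp add: card_Diff_subset)
  then have "card (K - C) > 0" using jk by simp
  then have "K - C \<noteq> {}" by (metis card.empty less_irrefl)
  then show ?thesis by blast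
qed

lemma part_i_fwd:
  fixes f :: "nat list \<Rightarrow> 'r::ab_group_add"
  assumes cf: "cochain G j f" and sp: "support G j f \<subseteq> flower K C" and cc: "is_cocycle G j f"
  shows "\<exists>r. f = f_M n G j k K C r"
proof -
  obtain w0 where w0: "w0 \<in> K - C" using ex_w by blast
  have "\<forall>w\<in>K - C. f (sC @ [w]) = f (sC @ [w0])"
    using cocycle_petals[OF cf sp cc _ w0] by blast
  then show ?thesis using f_form[OF cf sp] by blast
qed


end

context cx begin

lemma part_i_bwd:
  fixes f :: "nat list \<Rightarrow> 'r::ab_group_add"
  assumes cf: "cochain G j f" and sp: "support G j f \<subseteq> flower K C" and fr: "f = f_M n G j k K C r"
  shows "is_cocycle G j f"
  unfolding is_cocycle_def
proof (intro allI impI)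
  fix t assume os: "ordered_simplex G (j + 1) t"
  have dt: "distinct t" and lt: "length t = j + 2" and tG: "set t \<in> G"
    using os unfolding ordered_simplex_def by auto
  show "coboundary_op f t = 0"
  proof (cases "\<exists>w\<in>K - C. insert w C \<subseteq> set t")
    case False
    have "f (del_nth l t) = 0" for l
    proof (rule f_zero_sub[OF cf sp])
      have "set (del_nth l t) \<subseteq> set t" unfolding del_nth_def
        using set_take_subset set_drop_subset by fastforce
      then show "\<not> (\<exists>w\<in>K - C. insert w C \<subseteq> set (del_nth l t))" using False by blast
    qed
    then have "\<forall>l\<in>{..<length t}. sg l (f (del_nth l t)) = 0" by (simp add: sg_def)
    then show ?thesis unfolding cob_sg by (rule sum.neutral)
  next
    case True
    then obtain w where w: "w \<in> K - C" "insert w C \<subseteq> set t" by blast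
    have "insert w C \<in> flower K C" using w unfolding flower_def by auto
    then have tK: "set t \<subseteq> K" using fl tG w by blast
    have Ct: "C \<subseteq> set t" using w by auto
    have "card (set t - C) = 2" using dt lt Ct finC cC by (simp add: card_Diff_subset distinct_card)
    then obtain w1 w2 where D: "set t - C = {w1, w2}" "w1 \<noteq> w2" by (auto simp: card_2_iff)
    have w12: "w1 \<in> K - C" "w2 \<in> K - C" using D tK by auto
    define t0 where "t0 = sC @ [w1, w2]"
    have st: "set t0 = set t" using D Ct unfolding t0_def by auto
    have os0: "ordered_simplex G (j + 1) t0"
      using st tG w12 D(2) unfolding ordered_simplex_def t0_def by auto
    have f1: "f (sC @ [w1]) = r" and f2: "f (sC @ [w2]) = r" using fM_petal w12 fr by auto
    have "coboundary_op f t0 = sg j (f (sC @ [w2])) + sg (Suc j) (f (sC @ [w1]))"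
      unfolding t0_def using cob_two[OF cf sp, of w1 w2] w12 D(2) by auto
    moreover have "sg j r + sg (Suc j) r = 0" using sg_pair by blast
    ultimately have "coboundary_op f t0 = 0" using f1 f2 by simp
    show ?thesis
    proof (rule alt_zero[where P = "ordered_simplex G (j + 1)" and p = pos])
      show "inj_on pos (set t)" using tK Kn inj_pos' by blast
      show "distinct t0" using os0 unfolding ordered_simplex_def by auto
    qed (use dt st os os0 osimp_swap cob_alt[OF cochain_alt[OF cf]] \<open>coboundary_op f t0 = 0\<close> in auto)
  qed
qed


end

context cx begin

lemma not_cob:
  fixes f :: "nat list \<Rightarrow> 'r::ab_group_add"
  assumes cf: "cochain G j f" and sp: "support G j f \<subseteq> flower K C"
    and w: "w \<in> K - C" and a: "a \<in> {1..n} - K" and sh: "shell G j (C \<union> {w, a})"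
    and cb: "is_coboundary G j f"
  shows "f (sC @ [w]) = 0"
proof -
  obtain g where g: "\<forall>s. ordered_simplex G j s \<longrightarrow> f s = coboundary_op g s"
    using cb unfolding is_coboundary_def by blast
  define \<rho> where "\<rho> = sC @ [w, a]"
  have aC: "a \<notin> C" "w \<noteq> a" "w \<notin> C" using a w CK by auto
  have d\<rho>: "distinct \<rho>" using aC unfolding \<rho>_def by simp
  have l\<rho>: "length \<rho> = j + 2" unfolding \<rho>_def by simp
  have s\<rho>: "set \<rho> = C \<union> {w, a}" unfolding \<rho>_def by auto
  have face: "ordered_simplex G j (del_nth l \<rho>)" if l: "l < length \<rho>" for l
  proof -
    have sd: "set (del_nth l \<rho>) = set \<rho> - {\<rho> ! l}" using del_set[OF d\<rho> l] .
    have "card (set (del_nth l \<rho>)) = j + 1" using del_distinct[OF d\<rho>, of l] l l\<rho> by (simp add: distinct_card)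
    moreover have "set (del_nth l \<rho>) \<subseteq> C \<union> {w, a}" using sd s\<rho> by auto
    ultimately have "simplex G j (set (del_nth l \<rho>))" using sh unfolding shell_def by blast
    then show ?thesis using del_distinct[OF d\<rho>, of l] l l\<rho> unfolding ordered_simplex_def simplex_def
      by simp
  qed
  have "0 = coboundary_op (coboundary_op g) \<rho>" using dd by simp
  also have "\<dots> = (\<Sum>l<length \<rho>. sg l (coboundary_op g (del_nth l \<rho>)))" by (rule cob_sg)
  also have "\<dots> = (\<Sum>l<length \<rho>. sg l (f (del_nth l \<rho>)))" by (rule sum.cong) (use face g in auto)
  also have "\<dots> = coboundary_op f \<rho>" by (rule cob_sg[symmetric])
  also have "\<dots> = sg j (f (sC @ [a])) + sg (Suc j) (f (sC @ [w]))"
    unfolding \<rho>_def using cob_two[OF cf sp] aC by simp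
  also have "f (sC @ [a]) = 0"
  proof (rule f_zero[OF cf sp])
    show "\<not> (\<exists>w\<in>K - C. set (sC @ [a]) = insert w C)"
    proof
      assume "\<exists>w\<in>K - C. set (sC @ [a]) = insert w C"
      then obtain w' where w': "w' \<in> K - C" "insert a C = insert w' C" by auto
      then have "a \<in> insert w' C" by blast
      then show False using a aC w' by blast
    qed
  qed
  finally have "sg j 0 + sg (Suc j) (f (sC @ [w])) = 0" by simp
  then show ?thesis by (simp add: sg_def split: if_splits)
qed


end

lemma copy_facts:
  assumes SC: "simplicial_complex n G" and jk: "j \<le> k" and kd: "k \<le> d" and cp: "copy_M G d j k K C"
  shows "cx n j k G K C"
proof (cases "j + 1 \<le> k")
  case True
  then show ?thesis using cp kd SC jk unfolding copy_M_def simplex_def cx_def by auto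
next
  case False
  then have kj: "k = j" using jk by simp
  then have sK: "simplex G j K" and iso: "\<forall>\<sigma>\<in>G. K \<subseteq> \<sigma> \<longrightarrow> \<sigma> = K"
    and Cd: "C = set (take j (sorted_list_of_set K))"
    using cp False unfolding copy_M_def by auto
  have KG: "K \<in> G" and cK: "card K = j + 1" using sK unfolding simplex_def by auto
  have fK: "finite K"
  proof (rule ccontr)
    assume "\<not> finite K"
    then have "card K = 0" by simp
    with cK show False by simp
  qed
  have CK: "C \<subseteq> K" using Cd fK set_take_subset by fastforce
  have cC: "card C = j" using Cd fK cK by (simp add: distinct_card)
  have fl: "\<forall>\<sigma>\<in>G. (\<exists>p\<in>flower K C. p \<subseteq> \<sigma>) \<longrightarrow> \<sigma> \<subseteq> K"
  proof (intro ballI impI)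
    fix \<sigma> assume sG: "\<sigma> \<in> G" and "\<exists>p\<in>flower K C. p \<subseteq> \<sigma>"
    then obtain w where w: "w \<in> K - C" "insert w C \<subseteq> \<sigma>" unfolding flower_def by auto
    have "card (insert w C) = j + 1" using w cC CK fK finite_subset by fastforce
    then have "insert w C = K" using card_subset_eq[OF fK] w CK cK by auto
    then show "\<sigma> \<subseteq> K" using iso sG w by auto
  qed
  show ?thesis unfolding cx_def using SC KG cK CK cC fl kj by auto
qed

lemma mhat_facts:
  assumes SC: "simplicial_complex n G" and jk: "j \<le> k" and kd: "k \<le> d" and cp: "copy_M G d j k K C"
    and mh: "copy_Mhat n G d j k K C w a"
  shows "\<exists>w'. w' \<in> K - C \<and> a \<in> {1..n} - K \<and> shell G j (C \<union> {w', a})"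
proof (cases "j + 1 \<le> k")
  case True
  then show ?thesis using mh unfolding copy_Mhat_def by auto
next
  case False
  then have kj: "k = j" using jk by simp
  have cx: "cx n j k G K C" by (rule copy_facts[OF SC jk kd cp])
  have Cd: "C = set (take j (sorted_list_of_set K))"
    using cp False kj unfolding copy_M_def by auto
  have wM: "w = Max K" and sh: "shell G j (insert a K)" and a: "a \<in> {1..n} - K"
    using mh False unfolding copy_Mhat_def by auto
  have fK: "finite K" using cx.finK[OF cx] .
  have cK: "card K = j + 1" using cx.cK[OF cx] kj by simp
  have CK: "C \<subseteq> K" using cx.CK[OF cx] .
  have cC: "card C = j" using cx.cC[OF cx] .
  define sK where "sK = sorted_list_of_set K"
  have lsK: "length sK = j + 1" using cK fK by (simp add: sK_def)
  have ssK: "sorted_wrt (<) sK" by (simp add: sK_def)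
  have jK: "sK ! j \<in> K" using lsK fK by (metis sK_def lessI nth_mem Suc_eq_plus1 set_sorted_list_of_set)
  have Kne: "K \<noteq> {}" using cK by auto
  have "y < Max K" if y: "y \<in> C" for y
  proof -
    from y obtain i where i: "i < length (take j sK)" "take j sK ! i = y" using Cd sK_def by (metis in_set_conv_nth)
    then have "i < j" "y = sK ! i" using lsK by auto
    then have "y < sK ! j" using sorted_wrt_nth_less[OF ssK, of i j] lsK by simp
    also have "sK ! j \<le> Max K" using jK fK by simp
    finally show ?thesis .
  qed
  then have MC: "Max K \<in> K - C" using fK Kne by auto
  have "card (K - C) = 1" using cK cC CK fK by (simp add: card_Diff_subset finite_subset)
  then obtain x where "K - C = {x}" by (auto simp: card_1_singleton_iff)
  then have "K - C = {Max K}" using MC by auto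
  then have "K = C \<union> {Max K}" using CK by auto
  then have "insert a K = C \<union> {Max K, a}" by auto
  then show ?thesis using MC a sh wM by auto
qed

theorem proposition4p8:
  fixes n d j k :: nat and G :: "nat set set" and K C :: "nat set"
    and f :: "nat list \<Rightarrow> 'r::ab_group_add"
  assumes "d \<ge> 2" and "1 \<le> j" and "j \<le> d - 1" and "j \<le> k" and "k \<le> d"
    and "simplicial_complex n G"
    and "copy_M G d j k K C"
    and "cochain G j f"
    and "support G j f \<subseteq> flower K C"
  shows "(is_cocycle G j f \<longleftrightarrow> (\<exists>r. f = f_M n G j k K C r)) \<and>
         ((\<exists>w a. copy_Mhat n G d j k K C w a) \<longrightarrow>
         (is_cocycle G j f \<and> \<not> is_coboundary G j f \<longleftrightarrow> (\<exists>r. r \<noteq> 0 \<and> f = f_M n G j k K C r)))"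
proof -
  have cx: "cx n j k G K C" by (rule copy_facts[OF assms(6,4,5,7)])
  note cf = assms(8) and sp = assms(9)
  have i: "is_cocycle G j f \<longleftrightarrow> (\<exists>r. f = f_M n G j k K C r)"
    using cx.part_i_fwd[OF cx cf sp] cx.part_i_bwd[OF cx cf sp] by blast
  have ii: "is_cocycle G j f \<and> \<not> is_coboundary G j f \<longleftrightarrow> (\<exists>r. r \<noteq> 0 \<and> f = f_M n G j k K C r)"
    if "\<exists>w a. copy_Mhat n G d j k K C w a"
  proof -
    from that obtain w a where "copy_Mhat n G d j k K C w a" by blast
    then obtain w' where w': "w' \<in> K - C" "a \<in> {1..n} - K" "shell G j (C \<union> {w', a})"
      using mhat_facts[OF assms(6,4,5,7)] by blast
    show ?thesis
    proof
      assume h: "is_cocycle G j f \<and> \<not> is_coboundary G j f"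
      then obtain r where r: "f = f_M n G j k K C r" using i by blast
      have "r \<noteq> 0"
      proof
        assume "r = 0"
        then have f0: "f = (\<lambda>_. 0)" using r fM_zero by simp
        have "is_coboundary G j f"
          unfolding is_coboundary_def f0
          by (rule exI[where x = "\<lambda>_. 0"]) (simp add: cochain_def coboundary_op_def cong: if_cong)
        then show False using h by blast
      qed
      then show "\<exists>r. r \<noteq> 0 \<and> f = f_M n G j k K C r" using r by blast
    next
      assume "\<exists>r. r \<noteq> 0 \<and> f = f_M n G j k K C r"
      then obtain r where r: "r \<noteq> 0" "f = f_M n G j k K C r" by blast
      have cc: "is_cocycle G j f" using i r by blast
      have "\<not> is_coboundary G j f"
      proof
        assume "is_coboundary G j f"
        then have "f (sorted_list_of_set C @ [w']) = 0" using cx.not_cob[OF cx cf sp w'] by blast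
        moreover have "f (sorted_list_of_set C @ [w']) = r" using cx.fM_petal[OF cx w'(1)] r by simp
        ultimately show False using r by simp
      qed
      then show "is_cocycle G j f \<and> \<not> is_coboundary G j f" using cc by blast
    qed
  qed
  show ?thesis using i ii by blast
qed

end
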